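(* Let $A\to B$ be a horizontal (respectively vertical) arrow in a double complex in an abelian category, and suppose the row (respectively column) containing this arrow is exact at both $A$ and $B$. Then the extramural map $A_\square\to{}^\square B$ is an isomorphism.
   Context: Work in an abelian category $\mathcal{A}$. A double complex is a family of objects $A_{i,r}$ $(i,r\in\mathbb{Z})$ of $\mathcal{A}$, drawn in a grid with $i$ indexing rows (increasing downward) and $r$ indexing columns (increasing to the right), with horizontal maps $\delta_2:A_{i,r}\to A_{i,r+1}$ and vertical maps $\delta_1:A_{i,r}\to A_{i+1,r}$ satisfying $\delta_2\delta_2=0$, $\delta_1\delta_1=0$, $\delta_1\delta_2=\delta_2\delta_1$. A finite commutative diagram of this shape whose rows and columns are complexes is regarded as a double complex by completing it with zero objects. For an object $A=A_{i,r}$ write $d:A_{i,r-1}\to A$ and $e:A\to A_{i,r+1}$ for the horizontal maps into and out of $A$, $c:A_{i-1,r}\to A$ and $f:A\to A_{i+1,r}$ for the vertical maps into and out of $A$, $p:A_{i-1,r-1}\to A$ for the (common) composite of two arrows ending at $A$, and $q:A\to A_{i+1,r+1}$ for the composite of two arrows starting at $A$. Define: horizontal homology $H^{\mathrm h}(A)=\ker e/\operatorname{im} d$; vertical homology $H^{\mathrm v}(A)=\ker f/\operatorname{im} c$; the receptor ${}^\square A=(\ker e\cap\ker f)/\operatorname{im} p$; the donor $A_\square=\ker q/(\operatorname{im} c+\operatorname{im} d)$. The identity of $A$ induces the "intramural" maps ${}^\square A\to H^{\mathrm h}(A)\to A_\square$ and ${}^\square A\to H^{\mathrm v}(A)\to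 A_\square$. Each arrow $g:A\to B$ of the double complex (horizontal or vertical) induces the "extramural" map $A_\square\to{}^\square B$. A row or column is exact at an object if its homology there is zero. *)

theory Defs
  imports Main
begin

text \<open>A category is given by total types of objects 'o and morphisms 'm, with domain,
  codomain, composition (Comp C g f = g after f, meaningful when Dom g = Cod f) and identities.\<close>

record ('o, 'm) abcat =
  Dom  :: "'m \<Rightarrow> 'o"
  Cod  :: "'m \<Rightarrow> 'o"
  Comp :: "'m \<Rightarrow> 'm \<Rightarrow> 'm"
  Idm  :: "'o \<Rightarrow> 'm"
  Add  :: "'m \<Rightarrow> 'm \<Rightarrow> 'm"
  Zer  :: "'o \<Rightarrow> 'o \<Rightarrow> 'm"
  Neg  :: "'m \<Rightarrow> 'm"

definition hom :: "('o, 'm) abcat \<Rightarrow> 'o \<Rightarrow> 'o \<Rightarrow> 'm set" where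
  "hom C a b = {f. Dom C f = a \<and> Cod C f = b}"

definition is_category :: "('o, 'm) abcat \<Rightarrow> bool" where
  "is_category C \<longleftrightarrow>
     (\<forall>a. Idm C a \<in> hom C a a) \<and>
     (\<forall>f g. Dom C g = Cod C f \<longrightarrow> Comp C g f \<in> hom C (Dom C f) (Cod C g)) \<and>
     (\<forall>f. Comp C (Idm C (Cod C f)) f = f) \<and>
     (\<forall>f. Comp C f (Idm C (Dom C f)) = f) \<and>
     (\<forall>f g h. Dom C h = Cod C g \<and> Dom C g = Cod C f \<longrightarrow>
        Comp C (Comp C h g) f = Comp C h (Comp C g f))"

definition is_preadditive :: "('o, 'm) abcat \<Rightarrow> bool" where
  "is_preadditive C \<longleftrightarrow> is_category C \<and>
     (\<forall>a b. Zer C a b \<in> hom C a b) \<and>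
     (\<forall>a b f g. f \<in> hom C a b \<and> g \<in> hom C a b \<longrightarrow> Add C f g \<in> hom C a b) \<and>
     (\<forall>a b f. f \<in> hom C a b \<longrightarrow> Neg C f \<in> hom C a b) \<and>
     (\<forall>a b f g h. f \<in> hom C a b \<and> g \<in> hom C a b \<and> h \<in> hom C a b \<longrightarrow>
        Add C (Add C f g) h = Add C f (Add C g h)) \<and>
     (\<forall>a b f g. f \<in> hom C a b \<and> g \<in> hom C a b \<longrightarrow> Add C f g = Add C g f) \<and>
     (\<forall>a b f. f \<in> hom C a b \<longrightarrow> Add C f (Zer C a b) = f) \<and>
     (\<forall>a b f. f \<in> hom C a b \<longrightarrow> Add C f (Neg C f) = Zer C a b) \<and>
     (\<forall>a b c f g g'. f \<in> hom C a b \<and> g \<in> hom C b c \<and> g' \<in> hom C b c \<longrightarrow>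
        Comp C (Add C g g') f = Add C (Comp C g f) (Comp C g' f)) \<and>
     (\<forall>a b c f f' g. f \<in> hom C a b \<and> f' \<in> hom C a b \<and> g \<in> hom C b c \<longrightarrow>
        Comp C g (Add C f f') = Add C (Comp C g f) (Comp C g f'))"

definition is_zero_obj :: "('o, 'm) abcat \<Rightarrow> 'o \<Rightarrow> bool" where
  "is_zero_obj C z \<longleftrightarrow> (\<forall>a. (\<exists>!f. f \<in> hom C a z) \<and> (\<exists>!f. f \<in> hom C z a))"

definition is_additive :: "('o, 'm) abcat \<Rightarrow> bool" where
  "is_additive C \<longleftrightarrow> is_preadditive C \<and>
     (\<exists>z. is_zero_obj C z) \<and>
     (\<forall>a b. \<exists>s p1 p2 i1 i2.
        p1 \<in> hom C s a \<and> p2 \<in> hom C s b \<and> i1 \<in> hom C a s \<and> i2 \<in> hom C b s \<and>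
        Comp C p1 i1 = Idm C a \<and> Comp C p2 i2 = Idm C b \<and>
        Comp C p1 i2 = Zer C b a \<and> Comp C p2 i1 = Zer C a b \<and>
        Add C (Comp C i1 p1) (Comp C i2 p2) = Idm C s)"

definition is_mono :: "('o, 'm) abcat \<Rightarrow> 'm \<Rightarrow> bool" where
  "is_mono C m \<longleftrightarrow> (\<forall>g h. Cod C g = Dom C m \<and> Cod C h = Dom C m \<and> Dom C g = Dom C h \<and>
      Comp C m g = Comp C m h \<longrightarrow> g = h)"

definition is_epi :: "('o, 'm) abcat \<Rightarrow> 'm \<Rightarrow> bool" where
  "is_epi C e \<longleftrightarrow> (\<forall>g h. Dom C g = Cod C e \<and> Dom C h = Cod C e \<and> Cod C g = Cod C h \<and>
      Comp C g e = Comp C h e \<longrightarrow> g = h)"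

definition is_iso :: "('o, 'm) abcat \<Rightarrow> 'm \<Rightarrow> bool" where
  "is_iso C f \<longleftrightarrow> (\<exists>g. g \<in> hom C (Cod C f) (Dom C f) \<and>
      Comp C g f = Idm C (Dom C f) \<and> Comp C f g = Idm C (Cod C f))"

definition is_kernel :: "('o, 'm) abcat \<Rightarrow> 'm \<Rightarrow> 'm \<Rightarrow> bool" where
  "is_kernel C f k \<longleftrightarrow> Cod C k = Dom C f \<and> Comp C f k = Zer C (Dom C k) (Cod C f) \<and>
     (\<forall>h. Cod C h = Dom C f \<and> Comp C f h = Zer C (Dom C h) (Cod C f) \<longrightarrow>
        (\<exists>!u. Cod C u = Dom C k \<and> Dom C u = Dom C h \<and> Comp C k u = h))"

definition is_cokernel :: "('o, 'm) abcat \<Rightarrow> 'm \<Rightarrow> 'm \<Rightarrow> bool" where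
  "is_cokernel C f c \<longleftrightarrow> Dom C c = Cod C f \<and> Comp C c f = Zer C (Dom C f) (Cod C c) \<and>
     (\<forall>h. Dom C h = Cod C f \<and> Comp C h f = Zer C (Dom C f) (Cod C h) \<longrightarrow>
        (\<exists>!u. Dom C u = Cod C c \<and> Cod C u = Cod C h \<and> Comp C u c = h))"

definition is_abelian :: "('o, 'm) abcat \<Rightarrow> bool" where
  "is_abelian C \<longleftrightarrow> is_additive C \<and>
     (\<forall>f. \<exists>k. is_kernel C f k) \<and>
     (\<forall>f. \<exists>c. is_cokernel C f c) \<and>
     (\<forall>m. is_mono C m \<longrightarrow> (\<exists>f. is_kernel C f m)) \<and>
     (\<forall>e. is_epi C e \<longrightarrow> (\<exists>f. is_cokernel C f e))"

text \<open>Intersection of the kernels of e and f (same domain): the subobject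
  ker e \<inter> ker f, presented by its inclusion morphism (a joint kernel).\<close>
definition is_jkernel :: "('o, 'm) abcat \<Rightarrow> 'm \<Rightarrow> 'm \<Rightarrow> 'm \<Rightarrow> bool" where
  "is_jkernel C e f k \<longleftrightarrow> Cod C k = Dom C e \<and> Dom C f = Dom C e \<and>
     Comp C e k = Zer C (Dom C k) (Cod C e) \<and> Comp C f k = Zer C (Dom C k) (Cod C f) \<and>
     (\<forall>h. Cod C h = Dom C e \<and> Comp C e h = Zer C (Dom C h) (Cod C e) \<and>
          Comp C f h = Zer C (Dom C h) (Cod C f) \<longrightarrow>
        (\<exists>!u. Cod C u = Dom C k \<and> Dom C u = Dom C h \<and> Comp C k u = h))"

text \<open>Quotient of Cod u (= Cod v) by the sum of the images of u and v (a joint cokernel).\<close>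
definition is_jcokernel :: "('o, 'm) abcat \<Rightarrow> 'm \<Rightarrow> 'm \<Rightarrow> 'm \<Rightarrow> bool" where
  "is_jcokernel C u v c \<longleftrightarrow> Dom C c = Cod C u \<and> Cod C v = Cod C u \<and>
     Comp C c u = Zer C (Dom C u) (Cod C c) \<and> Comp C c v = Zer C (Dom C v) (Cod C c) \<and>
     (\<forall>h. Dom C h = Cod C u \<and> Comp C h u = Zer C (Dom C u) (Cod C h) \<and>
          Comp C h v = Zer C (Dom C v) (Cod C h) \<longrightarrow>
        (\<exists>!t. Dom C t = Cod C c \<and> Cod C t = Cod C h \<and> Comp C t c = h))"

definition ker :: "('o, 'm) abcat \<Rightarrow> 'm \<Rightarrow> 'm" where
  "ker C f = (SOME k. is_kernel C f k)"
definition coker :: "('o, 'm) abcat \<Rightarrow> 'm \<Rightarrow> 'm" where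
  "coker C f = (SOME c. is_cokernel C f c)"
definition jker :: "('o, 'm) abcat \<Rightarrow> 'm \<Rightarrow> 'm \<Rightarrow> 'm" where
  "jker C e f = (SOME k. is_jkernel C e f k)"
definition jcoker :: "('o, 'm) abcat \<Rightarrow> 'm \<Rightarrow> 'm \<Rightarrow> 'm" where
  "jcoker C u v = (SOME c. is_jcokernel C u v c)"

definition factor :: "('o, 'm) abcat \<Rightarrow> 'm \<Rightarrow> 'm \<Rightarrow> 'm" where
  "factor C k h = (SOME u. Cod C u = Dom C k \<and> Dom C u = Dom C h \<and> Comp C k u = h)"

text \<open>Objects X i r (row i, column r); horizontal maps d2 i r : X i r \<rightarrow> X i (r+1),
  vertical maps d1 i r : X i r \<rightarrow> X (i+1) r.\<close>
definition double_complex ::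
  "('o, 'm) abcat \<Rightarrow> (int \<Rightarrow> int \<Rightarrow> 'o) \<Rightarrow> (int \<Rightarrow> int \<Rightarrow> 'm) \<Rightarrow> (int \<Rightarrow> int \<Rightarrow> 'm) \<Rightarrow> bool" where
  "double_complex C X d1 d2 \<longleftrightarrow>
     (\<forall>i r. d2 i r \<in> hom C (X i r) (X i (r + 1))) \<and>
     (\<forall>i r. d1 i r \<in> hom C (X i r) (X (i + 1) r)) \<and>
     (\<forall>i r. Comp C (d2 i (r + 1)) (d2 i r) = Zer C (X i r) (X i (r + 2))) \<and>
     (\<forall>i r. Comp C (d1 (i + 1) r) (d1 i r) = Zer C (X i r) (X (i + 2) r)) \<and>
     (\<forall>i r. Comp C (d1 i (r + 1)) (d2 i r) = Comp C (d2 (i + 1) r) (d1 i r))"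

text \<open>Horizontal homology at (i,r): ker e / im d, as the cokernel of the factorization
  of d through ker e; this is the quotient map from ker e onto H^h.\<close>
definition Hh_proj :: "('o, 'm) abcat \<Rightarrow> (int \<Rightarrow> int \<Rightarrow> 'm) \<Rightarrow> int \<Rightarrow> int \<Rightarrow> 'm" where
  "Hh_proj C d2 i r = coker C (factor C (ker C (d2 i r)) (d2 i (r - 1)))"

definition Hv_proj :: "('o, 'm) abcat \<Rightarrow> (int \<Rightarrow> int \<Rightarrow> 'm) \<Rightarrow> int \<Rightarrow> int \<Rightarrow> 'm" where
  "Hv_proj C d1 i r = coker C (factor C (ker C (d1 i r)) (d1 (i - 1) r))"

definition row_exact_at :: "('o, 'm) abcat \<Rightarrow> (int \<Rightarrow> int \<Rightarrow> 'm) \<Rightarrow> int \<Rightarrow> int \<Rightarrow> bool" where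
  "row_exact_at C d2 i r \<longleftrightarrow> is_zero_obj C (Cod C (Hh_proj C d2 i r))"

definition col_exact_at :: "('o, 'm) abcat \<Rightarrow> (int \<Rightarrow> int \<Rightarrow> 'm) \<Rightarrow> int \<Rightarrow> int \<Rightarrow> bool" where
  "col_exact_at C d1 i r \<longleftrightarrow> is_zero_obj C (Cod C (Hv_proj C d1 i r))"

text \<open>Receptor at A = X i r: (ker e \<inter> ker f) / im p.\<close>
definition rec_incl where
  "rec_incl C d1 d2 i r = jker C (d2 i r) (d1 i r)"
definition rec_proj where
  "rec_proj C d1 d2 i r = coker C (factor C (rec_incl C d1 d2 i r)
       (Comp C (d1 (i - 1) r) (d2 (i - 1) (r - 1))))"

text \<open>Donor at A = X i r: ker q / (im c + im d).\<close>
definition don_incl where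
  "don_incl C d1 d2 i r = ker C (Comp C (d1 i (r + 1)) (d2 i r))"
definition don_proj where
  "don_proj C d1 d2 i r = jcoker C (factor C (don_incl C d1 d2 i r) (d1 (i - 1) r))
                                   (factor C (don_incl C d1 d2 i r) (d2 i (r - 1)))"

text \<open>Extramural map A_\<box> \<rightarrow> \<box>B induced by an arrow g : A = X i r \<rightarrow> B = X i' r'
  of the double complex: the unique m with m \<circ> (ker q \<rightarrow> A_\<box>) = (ker e_B \<inter> ker f_B \<rightarrow> \<box>B) \<circ> w,
  where w is the factorization of g \<circ> (ker q \<hookrightarrow> A) through ker e_B \<inter> ker f_B.\<close>
definition extramural where
  "extramural C d1 d2 i r i' r' g =
     (SOME m. Dom C m = Cod C (don_proj C d1 d2 i r) \<and>
              Cod C m = Cod C (rec_proj C d1 d2 i' r') \<and>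
              Comp C m (don_proj C d1 d2 i r) =
                Comp C (rec_proj C d1 d2 i' r')
                  (factor C (rec_incl C d1 d2 i' r') (Comp C g (don_incl C d1 d2 i r))))"

end

theory Submission
  imports Defs
begin


locale abc =
  fixes C :: "('o,'m) abcat"
  assumes abel: "is_abelian C"
begin

abbreviation cmp (infixr "\<cdot>" 55) where "g \<cdot> f \<equiv> Comp C g f"
abbreviation zr where "zr a b \<equiv> Zer C a b"
abbreviation dom where "dom \<equiv> Dom C"
abbreviation cod where "cod \<equiv> Cod C"
abbreviation ad where "ad \<equiv> Add C"
abbreviation ng where "ng \<equiv> Neg C"

lemma cat: "is_category C" and pre: "is_preadditive C" and addi: "is_additive C"
  using abel unfolding is_abelian_def is_additive_def is_preadditive_def by auto

lemma comp_dom[simp]: "dom g = cod f \<Longrightarrow> dom (g \<cdot> f) = dom f"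
  and comp_cod[simp]: "dom g = cod f \<Longrightarrow> cod (g \<cdot> f) = cod g"
  using cat unfolding is_category_def hom_def by auto

lemma assoc: "dom h = cod g \<Longrightarrow> dom g = cod f \<Longrightarrow> (h \<cdot> g) \<cdot> f = h \<cdot> (g \<cdot> f)"
  using cat unfolding is_category_def by auto

lemma id_dom[simp]: "dom (Idm C a) = a" and id_cod[simp]: "cod (Idm C a) = a"
  using cat unfolding is_category_def hom_def by auto

lemma id_l[simp]: "cod f = a \<Longrightarrow> Idm C a \<cdot> f = f"
  and id_r[simp]: "dom f = a \<Longrightarrow> f \<cdot> Idm C a = f"
  using cat unfolding is_category_def by auto

lemma zr_dom[simp]: "dom (zr a b) = a" and zr_cod[simp]: "cod (zr a b) = b"
  using pre unfolding is_preadditive_def hom_def by auto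

lemma ad_dom[simp]: "dom f = dom g \<Longrightarrow> cod f = cod g \<Longrightarrow> dom (ad f g) = dom f"
  and ad_cod[simp]: "dom f = dom g \<Longrightarrow> cod f = cod g \<Longrightarrow> cod (ad f g) = cod f"
  using pre unfolding is_preadditive_def hom_def by auto

lemma ng_dom[simp]: "dom (ng f) = dom f" and ng_cod[simp]: "cod (ng f) = cod f"
  using pre unfolding is_preadditive_def hom_def by auto

lemma ad_assoc: "dom f = dom g \<Longrightarrow> cod f = cod g \<Longrightarrow> dom h = dom g \<Longrightarrow> cod h = cod g \<Longrightarrow>
   ad (ad f g) h = ad f (ad g h)"
proof -
  have "\<forall>a b f g h. f \<in> hom C a b \<and> g \<in> hom C a b \<and> h \<in> hom C a b \<longrightarrow>
        Add C (Add C f g) h = Add C f (Add C g h)" using pre unfolding is_preadditive_def by (elim conjE) assumption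
  moreover assume "dom f = dom g" "cod f = cod g" "dom h = dom g" "cod h = cod g"
  ultimately show ?thesis unfolding hom_def by blast
qed

lemma ad_comm: "dom f = dom g \<Longrightarrow> cod f = cod g \<Longrightarrow> ad f g = ad g f"
proof -
  have "\<forall>a b f g. f \<in> hom C a b \<and> g \<in> hom C a b \<longrightarrow> Add C f g = Add C g f"
    using pre unfolding is_preadditive_def by (elim conjE) assumption
  moreover assume "dom f = dom g" "cod f = cod g"
  ultimately show ?thesis unfolding hom_def by blast
qed

lemma ad_zr: "dom f = a \<Longrightarrow> cod f = b \<Longrightarrow> ad f (zr a b) = f"
proof -
  have "\<forall>a b f. f \<in> hom C a b \<longrightarrow> Add C f (Zer C a b) = f"
    using pre unfolding is_preadditive_def by (elim conjE) assumption
  moreover assume "dom f = a" "cod f = b"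
  ultimately show ?thesis unfolding hom_def by blast
qed

lemma zr_ad: "dom f = a \<Longrightarrow> cod f = b \<Longrightarrow> ad (zr a b) f = f"
  using ad_zr ad_comm by (metis zr_cod zr_dom)

lemma ad_ng: "ad f (ng f) = zr (dom f) (cod f)"
proof -
  have "\<forall>a b f. f \<in> hom C a b \<longrightarrow> Add C f (Neg C f) = Zer C a b"
    using pre unfolding is_preadditive_def by (elim conjE) assumption
  thus ?thesis unfolding hom_def by blast
qed

lemma distr_r: "dom g = cod f \<Longrightarrow> dom g' = cod f \<Longrightarrow> cod g' = cod g \<Longrightarrow>
   (ad g g') \<cdot> f = ad (g \<cdot> f) (g' \<cdot> f)"
proof -
  have "\<forall>a b c f g g'. f \<in> hom C a b \<and> g \<in> hom C b c \<and> g' \<in> hom C b c \<longrightarrow>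
        Comp C (Add C g g') f = Add C (Comp C g f) (Comp C g' f)"
    using pre unfolding is_preadditive_def by (elim conjE) assumption
  moreover assume "dom g = cod f" "dom g' = cod f" "cod g' = cod g"
  ultimately show ?thesis unfolding hom_def by blast
qed

lemma distr_l: "dom f = dom f' \<Longrightarrow> cod f' = cod f \<Longrightarrow> dom g = cod f \<Longrightarrow>
   g \<cdot> (ad f f') = ad (g \<cdot> f) (g \<cdot> f')"
proof -
  have "\<forall>a b c f f' g. f \<in> hom C a b \<and> f' \<in> hom C a b \<and> g \<in> hom C b c \<longrightarrow>
        Comp C g (Add C f f') = Add C (Comp C g f) (Comp C g f')"
    using pre unfolding is_preadditive_def by (elim conjE) assumption
  moreover assume "dom f = dom f'" "cod f' = cod f" "dom g = cod f"
  ultimately show ?thesis unfolding hom_def by blast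
qed

lemma idem_zero: "dom x = a \<Longrightarrow> cod x = b \<Longrightarrow> ad x x = x \<Longrightarrow> x = zr a b"
proof -
  assume h: "dom x = a" "cod x = b" "ad x x = x"
  have "x = ad x (ad x (ng x))" using h(1,2) by (simp add: ad_ng ad_zr)
  also have "\<dots> = ad (ad x x) (ng x)" using h(1,2) by (simp add: ad_assoc)
  also have "\<dots> = zr a b" using h by (simp add: ad_ng)
  finally show ?thesis .
qed

lemma zr_comp[simp]: "cod f = a \<Longrightarrow> zr a b \<cdot> f = zr (dom f) b"
proof -
  assume h: "cod f = a"
  have "ad (zr a b \<cdot> f) (zr a b \<cdot> f) = (ad (zr a b) (zr a b)) \<cdot> f"
    using h by (simp add: distr_r)
  also have "\<dots> = zr a b \<cdot> f" by (simp add: ad_zr)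
  finally have e: "ad (zr a b \<cdot> f) (zr a b \<cdot> f) = zr a b \<cdot> f" .
  show ?thesis by (rule idem_zero[OF _ _ e]) (simp_all add: h)
qed

lemma comp_zr[simp]: "dom f = b \<Longrightarrow> f \<cdot> zr a b = zr a (cod f)"
proof -
  assume h: "dom f = b"
  have "ad (f \<cdot> zr a b) (f \<cdot> zr a b) = f \<cdot> (ad (zr a b) (zr a b))"
    using h by (simp add: distr_l)
  also have "\<dots> = f \<cdot> zr a b" by (simp add: ad_zr)
  finally have e: "ad (f \<cdot> zr a b) (f \<cdot> zr a b) = f \<cdot> zr a b" .
  show ?thesis by (rule idem_zero[OF _ _ e]) (simp_all add: h)
qed

lemma inv_unique: "dom a = dom x \<Longrightarrow> cod a = cod x \<Longrightarrow> dom b = dom x \<Longrightarrow> cod b = cod x \<Longrightarrow>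
  ad a x = zr (dom x) (cod x) \<Longrightarrow> ad b x = zr (dom x) (cod x) \<Longrightarrow> a = b"
proof -
  assume h: "dom a = dom x" "cod a = cod x" "dom b = dom x" "cod b = cod x"
    "ad a x = zr (dom x) (cod x)" "ad b x = zr (dom x) (cod x)"
  have "a = ad a (ad x (ng x))" using h(1,2) by (simp add: ad_ng ad_zr)
  also have "\<dots> = ad (ad a x) (ng x)" by (rule ad_assoc[symmetric]) (use h in simp_all)
  also have "\<dots> = ad (ad b x) (ng x)" using h(5,6) by simp
  also have "\<dots> = ad b (ad x (ng x))" by (rule ad_assoc) (use h in simp_all)
  also have "\<dots> = b" using h(3,4) by (simp add: ad_ng ad_zr)
  finally show ?thesis .
qed

lemma ng_comp: "dom y = cod v \<Longrightarrow> (ng y) \<cdot> v = ng (y \<cdot> v)"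
proof -
  assume h: "dom y = cod v"
  have a1: "ad ((ng y) \<cdot> v) (y \<cdot> v) = zr (dom v) (cod y)"
  proof -
    have "ad ((ng y) \<cdot> v) (y \<cdot> v) = ad (ng y) y \<cdot> v" using h by (simp add: distr_r)
    also have "ad (ng y) y = zr (dom y) (cod y)" using ad_comm[of "ng y" y] by (simp add: ad_ng)
    finally show ?thesis using h by simp
  qed
  have a2: "ad (ng (y \<cdot> v)) (y \<cdot> v) = zr (dom v) (cod y)"
    using h ad_comm[of "ng (y \<cdot> v)" "y \<cdot> v"] by (simp add: ad_ng)
  show ?thesis by (rule inv_unique[of _ "y \<cdot> v"]) (use h a1 a2 in simp_all)
qed

lemma sub_zero: "dom a = dom b \<Longrightarrow> cod a = cod b \<Longrightarrow> ad a (ng b) = zr (dom b) (cod b) \<Longrightarrow> a = b"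
  by (rule inv_unique[of _ "ng b"]) (auto simp: ad_ng)

end

context abc begin

lemma epi_cancel: "is_epi C e \<Longrightarrow> dom t = cod e \<Longrightarrow> t \<cdot> e = zr (dom e) (cod t) \<Longrightarrow>
   t = zr (cod e) (cod t)"
  unfolding is_epi_def by (erule allE[of _ t], erule allE[of _ "zr (cod e) (cod t)"]) simp

lemma epiI: assumes "\<And>t. dom t = cod e \<Longrightarrow> t \<cdot> e = zr (dom e) (cod t) \<Longrightarrow> t = zr (cod e) (cod t)"
  shows "is_epi C e"
  unfolding is_epi_def
proof (intro allI impI)
  fix g h assume a: "dom g = cod e \<and> dom h = cod e \<and> cod g = cod h \<and> g \<cdot> e = h \<cdot> e"
  have "(ad g (ng h)) \<cdot> e = ad (g \<cdot> e) ((ng h) \<cdot> e)" using a by (simp add: distr_r)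
  also have "\<dots> = ad (h \<cdot> e) (ng (h \<cdot> e))" using a by (simp add: ng_comp)
  also have "\<dots> = zr (dom e) (cod h)" using a by (simp add: ad_ng)
  finally have "(ad g (ng h)) \<cdot> e = zr (dom e) (cod (ad g (ng h)))" using a by simp
  hence "ad g (ng h) = zr (cod e) (cod (ad g (ng h)))" using a by - (rule assms, simp_all)
  thus "g = h" using a by - (rule sub_zero, simp_all)
qed

lemma mono_cancel: "is_mono C m \<Longrightarrow> cod t = dom m \<Longrightarrow> m \<cdot> t = zr (dom t) (cod m) \<Longrightarrow>
   t = zr (dom t) (dom m)"
  unfolding is_mono_def by (erule allE[of _ t], erule allE[of _ "zr (dom t) (dom m)"]) simp

lemma monoI: assumes "\<And>t. cod t = dom m \<Longrightarrow> m \<cdot> t = zr (dom t) (cod m) \<Longrightarrow> t = zr (dom t) (dom m)"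
  shows "is_mono C m"
  unfolding is_mono_def
proof (intro allI impI)
  fix g h assume a: "cod g = dom m \<and> cod h = dom m \<and> dom g = dom h \<and> m \<cdot> g = m \<cdot> h"
  have "m \<cdot> (ad g (ng h)) = ad (m \<cdot> g) (m \<cdot> (ng h))" using a by (simp add: distr_l)
  also have "m \<cdot> (ng h) = ng (m \<cdot> h)"
  proof -
    have a1: "ad (m \<cdot> ng h) (m \<cdot> h) = zr (dom h) (cod m)"
    proof -
      have "ad (m \<cdot> ng h) (m \<cdot> h) = m \<cdot> ad (ng h) h" using a by (simp add: distr_l)
      also have "ad (ng h) h = zr (dom h) (cod h)" using ad_comm[of "ng h" h] by (simp add: ad_ng)
      finally show ?thesis using a by simp
    qed
    have a2: "ad (ng (m \<cdot> h)) (m \<cdot> h) = zr (dom h) (cod m)"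
      using a ad_comm[of "ng (m \<cdot> h)" "m \<cdot> h"] by (simp add: ad_ng)
    show ?thesis by (rule inv_unique[of _ "m \<cdot> h"]) (use a a1 a2 in simp_all)
  qed
  also have "ad (m \<cdot> g) (ng (m \<cdot> h)) = zr (dom h) (cod m)" using a by (simp add: ad_ng)
  finally have "m \<cdot> (ad g (ng h)) = zr (dom (ad g (ng h))) (cod m)" using a by simp
  hence "ad g (ng h) = zr (dom (ad g (ng h))) (dom m)" using a by - (rule assms, simp_all)
  thus "g = h" using a by - (rule sub_zero, simp_all)
qed

lemma epi_comp: "is_epi C a \<Longrightarrow> is_epi C b \<Longrightarrow> dom a = cod b \<Longrightarrow> is_epi C (a \<cdot> b)"
proof (rule epiI)
  fix t assume h: "is_epi C a" "is_epi C b" "dom a = cod b" "dom t = cod (a \<cdot> b)"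
    "t \<cdot> (a \<cdot> b) = zr (dom (a \<cdot> b)) (cod t)"
  have "(t \<cdot> a) \<cdot> b = zr (dom b) (cod (t \<cdot> a))" using h by (simp add: assoc)
  hence "t \<cdot> a = zr (cod b) (cod (t \<cdot> a))" using h by - (rule epi_cancel, simp_all)
  hence "t = zr (cod a) (cod t)" using h by - (rule epi_cancel, simp_all)
  thus "t = zr (cod (a \<cdot> b)) (cod t)" using h by simp
qed

lemma epi_left: "is_epi C (a \<cdot> b) \<Longrightarrow> dom a = cod b \<Longrightarrow> is_epi C a"
proof (rule epiI)
  fix t assume h: "is_epi C (a \<cdot> b)" "dom a = cod b" "dom t = cod a" "t \<cdot> a = zr (dom a) (cod t)"
  have "t \<cdot> (a \<cdot> b) = zr (dom (a \<cdot> b)) (cod t)" using h by (simp add: assoc[symmetric])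
  hence "t = zr (cod (a \<cdot> b)) (cod t)" using h by - (rule epi_cancel, simp_all)
  thus "t = zr (cod a) (cod t)" using h by simp
qed

lemma mono_comp: "is_mono C a \<Longrightarrow> is_mono C b \<Longrightarrow> dom a = cod b \<Longrightarrow> is_mono C (a \<cdot> b)"
proof (rule monoI)
  fix t assume h: "is_mono C a" "is_mono C b" "dom a = cod b" "cod t = dom (a \<cdot> b)"
    "(a \<cdot> b) \<cdot> t = zr (dom t) (cod (a \<cdot> b))"
  have "a \<cdot> (b \<cdot> t) = zr (dom (b \<cdot> t)) (cod a)" using h by (simp add: assoc)
  hence "b \<cdot> t = zr (dom (b \<cdot> t)) (dom a)" using h by - (rule mono_cancel, simp_all)
  hence "t = zr (dom t) (dom b)" using h by - (rule mono_cancel, simp_all)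
  thus "t = zr (dom t) (dom (a \<cdot> b))" using h by simp
qed

lemma mono_right: "is_mono C (a \<cdot> b) \<Longrightarrow> dom a = cod b \<Longrightarrow> is_mono C b"
proof (rule monoI)
  fix t assume h: "is_mono C (a \<cdot> b)" "dom a = cod b" "cod t = dom b" "b \<cdot> t = zr (dom t) (cod b)"
  have "(a \<cdot> b) \<cdot> t = zr (dom t) (cod (a \<cdot> b))" using h by (simp add: assoc)
  hence "t = zr (dom t) (dom (a \<cdot> b))" using h by - (rule mono_cancel, simp_all)
  thus "t = zr (dom t) (dom b)" using h by simp
qed

lemma id_epi: "is_epi C (Idm C a)"
  by (rule epiI) simp
lemma id_mono: "is_mono C (Idm C a)"
  by (rule monoI) simp

end

context abc begin

lemma ker_ex: "is_kernel C f (ker C f)"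
proof -
  have "\<exists>k. is_kernel C f k" using abel unfolding is_abelian_def by blast
  thus ?thesis unfolding ker_def by (rule someI_ex)
qed

lemma coker_ex: "is_cokernel C f (coker C f)"
proof -
  have "\<exists>k. is_cokernel C f k" using abel unfolding is_abelian_def by blast
  thus ?thesis unfolding coker_def by (rule someI_ex)
qed

lemma kernel_cod: "is_kernel C f k \<Longrightarrow> cod k = dom f"
  and kernel_zero: "is_kernel C f k \<Longrightarrow> f \<cdot> k = zr (dom k) (cod f)"
  unfolding is_kernel_def by auto

lemma kernel_lift: "is_kernel C f k \<Longrightarrow> cod h = dom f \<Longrightarrow> f \<cdot> h = zr (dom h) (cod f) \<Longrightarrow>
   \<exists>u. cod u = dom k \<and> dom u = dom h \<and> k \<cdot> u = h"
  unfolding is_kernel_def by blast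

lemma kernel_mono: assumes k: "is_kernel C f k" shows "is_mono C k"
proof (rule monoI)
  fix t assume t: "cod t = dom k" "k \<cdot> t = zr (dom t) (cod k)"
  let ?h = "zr (dom t) (cod k)"
  have "\<exists>!u. cod u = dom k \<and> dom u = dom ?h \<and> k \<cdot> u = ?h"
    using k unfolding is_kernel_def by (elim conjE allE[of _ ?h]) simp
  moreover have "cod t = dom k \<and> dom t = dom ?h \<and> k \<cdot> t = ?h" using t by simp
  moreover have "cod (zr (dom t) (dom k)) = dom k \<and> dom (zr (dom t) (dom k)) = dom ?h \<and>
     k \<cdot> (zr (dom t) (dom k)) = ?h" by simp
  ultimately show "t = zr (dom t) (dom k)" by blast
qed

lemma cokernel_dom: "is_cokernel C f c \<Longrightarrow> dom c = cod f"
  and cokernel_zero: "is_cokernel C f c \<Longrightarrow> c \<cdot> f = zr (dom f) (cod c)"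
  unfolding is_cokernel_def by auto

lemma cokernel_desc: "is_cokernel C f c \<Longrightarrow> dom h = cod f \<Longrightarrow> h \<cdot> f = zr (dom f) (cod h) \<Longrightarrow>
   \<exists>u. dom u = cod c \<and> cod u = cod h \<and> u \<cdot> c = h"
  unfolding is_cokernel_def by blast

lemma cokernel_epi: assumes k: "is_cokernel C f c" shows "is_epi C c"
proof (rule epiI)
  fix t assume t: "dom t = cod c" "t \<cdot> c = zr (dom c) (cod t)"
  let ?h = "zr (dom c) (cod t)"
  have "\<exists>!u. dom u = cod c \<and> cod u = cod ?h \<and> u \<cdot> c = ?h"
    using k unfolding is_cokernel_def by (elim conjE allE[of _ ?h]) simp
  moreover have "dom t = cod c \<and> cod t = cod ?h \<and> t \<cdot> c = ?h" using t by simp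
  moreover have "dom (zr (cod c) (cod t)) = cod c \<and> cod (zr (cod c) (cod t)) = cod ?h \<and>
     (zr (cod c) (cod t)) \<cdot> c = ?h" by simp
  ultimately show "t = zr (cod c) (cod t)" by blast
qed

lemma jkernel_cod: "is_jkernel C e f k \<Longrightarrow> cod k = dom e"
  and jkernel_dom2: "is_jkernel C e f k \<Longrightarrow> dom f = dom e"
  and jkernel_zero1: "is_jkernel C e f k \<Longrightarrow> e \<cdot> k = zr (dom k) (cod e)"
  and jkernel_zero2: "is_jkernel C e f k \<Longrightarrow> f \<cdot> k = zr (dom k) (cod f)"
  unfolding is_jkernel_def by auto

lemma jkernel_lift: "is_jkernel C e f k \<Longrightarrow> cod h = dom e \<Longrightarrow> e \<cdot> h = zr (dom h) (cod e) \<Longrightarrow>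
   f \<cdot> h = zr (dom h) (cod f) \<Longrightarrow> \<exists>u. cod u = dom k \<and> dom u = dom h \<and> k \<cdot> u = h"
  unfolding is_jkernel_def by blast

lemma jkernel_mono: assumes k: "is_jkernel C e f k" shows "is_mono C k"
proof (rule monoI)
  fix t assume t: "cod t = dom k" "k \<cdot> t = zr (dom t) (cod k)"
  let ?h = "zr (dom t) (cod k)"
  have "\<exists>!u. cod u = dom k \<and> dom u = dom ?h \<and> k \<cdot> u = ?h"
    using k unfolding is_jkernel_def by (elim conjE allE[of _ ?h]) simp
  moreover have "cod t = dom k \<and> dom t = dom ?h \<and> k \<cdot> t = ?h" using t by simp
  moreover have "cod (zr (dom t) (dom k)) = dom k \<and> dom (zr (dom t) (dom k)) = dom ?h \<and>
     k \<cdot> (zr (dom t) (dom k)) = ?h" by simp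
  ultimately show "t = zr (dom t) (dom k)" by blast
qed

lemma jkernel_sym: assumes a: "is_jkernel C e f k" shows "is_jkernel C f e k"
proof -
  have e: "dom f = dom e" using a unfolding is_jkernel_def by blast
  show ?thesis using a unfolding is_jkernel_def e by (simp add: conj_ac)
qed

lemma jcokernel_dom: "is_jcokernel C u v c \<Longrightarrow> dom c = cod u"
  and jcokernel_cod2: "is_jcokernel C u v c \<Longrightarrow> cod v = cod u"
  and jcokernel_zero1: "is_jcokernel C u v c \<Longrightarrow> c \<cdot> u = zr (dom u) (cod c)"
  and jcokernel_zero2: "is_jcokernel C u v c \<Longrightarrow> c \<cdot> v = zr (dom v) (cod c)"
  unfolding is_jcokernel_def by auto

lemma jcokernel_desc: "is_jcokernel C u v c \<Longrightarrow> dom h = cod u \<Longrightarrow> h \<cdot> u = zr (dom u) (cod h) \<Longrightarrow>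
   h \<cdot> v = zr (dom v) (cod h) \<Longrightarrow> \<exists>t. dom t = cod c \<and> cod t = cod h \<and> t \<cdot> c = h"
  unfolding is_jcokernel_def by blast

lemma jcokernel_epi: assumes k: "is_jcokernel C u v c" shows "is_epi C c"
proof (rule epiI)
  fix t assume t: "dom t = cod c" "t \<cdot> c = zr (dom c) (cod t)"
  let ?h = "zr (dom c) (cod t)"
  have "\<exists>!s. dom s = cod c \<and> cod s = cod ?h \<and> s \<cdot> c = ?h"
    using k unfolding is_jcokernel_def by (elim conjE allE[of _ ?h]) simp
  moreover have "dom t = cod c \<and> cod t = cod ?h \<and> t \<cdot> c = ?h" using t by simp
  moreover have "dom (zr (cod c) (cod t)) = cod c \<and> cod (zr (cod c) (cod t)) = cod ?h \<and>
     (zr (cod c) (cod t)) \<cdot> c = ?h" by simp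
  ultimately show "t = zr (cod c) (cod t)" by blast
qed

lemma jcokernel_sym: assumes a: "is_jcokernel C u v c" shows "is_jcokernel C v u c"
proof -
  have e: "cod v = cod u" using a unfolding is_jcokernel_def by blast
  show ?thesis using a unfolding is_jcokernel_def e by (simp add: conj_ac)
qed

lemma factor_prop: "\<exists>u. cod u = dom k \<and> dom u = dom h \<and> k \<cdot> u = h \<Longrightarrow>
   cod (factor C k h) = dom k \<and> dom (factor C k h) = dom h \<and> k \<cdot> factor C k h = h"
  unfolding factor_def by (rule someI_ex)

lemma zero_from: assumes z: "is_zero_obj C z" and u: "dom u = z" shows "u = zr z (cod u)"
proof -
  have "\<exists>!f. f \<in> hom C z (cod u)" using z unfolding is_zero_obj_def by blast
  then obtain f where f: "\<And>y. y \<in> hom C z (cod u) \<Longrightarrow> y = f" by blast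
  have "u = f" by (rule f) (simp add: hom_def u)
  moreover have "zr z (cod u) = f" by (rule f) (simp add: hom_def)
  ultimately show ?thesis by simp
qed

lemma zero_coker_epi: assumes c: "is_cokernel C f c" and z: "is_zero_obj C (cod c)"
  shows "is_epi C f"
proof (rule epiI)
  fix t assume t: "dom t = cod f" "t \<cdot> f = zr (dom f) (cod t)"
  obtain u where u: "dom u = cod c" "cod u = cod t" "u \<cdot> c = t"
    using cokernel_desc[OF c t] by blast
  have "u = zr (cod c) (cod t)" using zero_from[OF z u(1)] u(2) by simp
  hence "t = zr (cod c) (cod t) \<cdot> c" using u(3) by simp
  thus "t = zr (cod f) (cod t)" using cokernel_dom[OF c] by simp
qed

lemma normal_epi: "is_epi C e \<Longrightarrow> \<exists>f. is_cokernel C f e"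
  using abel unfolding is_abelian_def by blast
lemma normal_mono: "is_mono C m \<Longrightarrow> \<exists>f. is_kernel C f m"
  using abel unfolding is_abelian_def by blast

lemma epi_desc: assumes e: "is_epi C e" and t: "dom t = dom e"
  and kill: "\<And>n. cod n = dom e \<Longrightarrow> e \<cdot> n = zr (dom n) (cod e) \<Longrightarrow> t \<cdot> n = zr (dom n) (cod t)"
  shows "\<exists>s. dom s = cod e \<and> cod s = cod t \<and> s \<cdot> e = t"
proof -
  obtain f where f: "is_cokernel C f e" using normal_epi[OF e] by blast
  have "t \<cdot> f = zr (dom f) (cod t)"
    using kill[of f] cokernel_zero[OF f] cokernel_dom[OF f] by simp
  thus ?thesis using cokernel_desc[OF f, of t] t cokernel_dom[OF f] by simp
qed

end

context abc begin

lemma mono_unique: "is_mono C m \<Longrightarrow> cod a = dom m \<Longrightarrow> cod b = dom m \<Longrightarrow> dom a = dom b \<Longrightarrow>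
  m \<cdot> a = m \<cdot> b \<Longrightarrow> a = b"
  unfolding is_mono_def by blast

lemma epi_unique: "is_epi C e \<Longrightarrow> dom a = cod e \<Longrightarrow> dom b = cod e \<Longrightarrow> cod a = cod b \<Longrightarrow>
  a \<cdot> e = b \<cdot> e \<Longrightarrow> a = b"
  unfolding is_epi_def by blast

lemma jkernel_ex: assumes d: "dom f = dom e" shows "is_jkernel C e f (jker C e f)"
proof -
  define k1 where "k1 = ker C e"
  define k2 where "k2 = ker C (f \<cdot> k1)"
  have K1: "is_kernel C e k1" unfolding k1_def by (rule ker_ex)
  have K2: "is_kernel C (f \<cdot> k1) k2" unfolding k2_def by (rule ker_ex)
  have c1: "cod k1 = dom e" using kernel_cod[OF K1] .
  have c2: "cod k2 = dom k1" using kernel_cod[OF K2] c1 d by simp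
  have m: "is_mono C (k1 \<cdot> k2)" using mono_comp[OF kernel_mono[OF K1] kernel_mono[OF K2]] c2 by simp
  have "is_jkernel C e f (k1 \<cdot> k2)"
    unfolding is_jkernel_def
  proof (intro conjI allI impI)
    show "cod (k1 \<cdot> k2) = dom e" using c1 c2 by simp
    show "dom f = dom e" by (rule d)
    show "e \<cdot> k1 \<cdot> k2 = zr (dom (k1 \<cdot> k2)) (cod e)"
      using c1 c2 kernel_zero[OF K1] by (simp add: assoc[symmetric])
    have "f \<cdot> k1 \<cdot> k2 = (f \<cdot> k1) \<cdot> k2" using c1 c2 d by (simp add: assoc)
    also have "\<dots> = zr (dom k2) (cod (f \<cdot> k1))" using kernel_zero[OF K2] .
    finally show "f \<cdot> k1 \<cdot> k2 = zr (dom (k1 \<cdot> k2)) (cod f)" using c1 c2 d by simp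
    fix h assume h: "cod h = dom e \<and> e \<cdot> h = zr (dom h) (cod e) \<and> f \<cdot> h = zr (dom h) (cod f)"
    obtain u1 where u1: "cod u1 = dom k1" "dom u1 = dom h" "k1 \<cdot> u1 = h"
      using kernel_lift[OF K1] h by blast
    have "(f \<cdot> k1) \<cdot> u1 = zr (dom u1) (cod (f \<cdot> k1))"
      using h u1 c1 d by (simp add: assoc)
    then obtain u2 where u2: "cod u2 = dom k2" "dom u2 = dom u1" "k2 \<cdot> u2 = u1"
      using kernel_lift[OF K2, of u1] u1 c1 d by auto
    have ex: "cod u2 = dom (k1 \<cdot> k2) \<and> dom u2 = dom h \<and> (k1 \<cdot> k2) \<cdot> u2 = h"
      using u1 u2 c1 c2 by (simp add: assoc)
    show "\<exists>!u. cod u = dom (k1 \<cdot> k2) \<and> dom u = dom h \<and> (k1 \<cdot> k2) \<cdot> u = h"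
    proof (rule ex1I[of _ u2])
      show "cod u2 = dom (k1 \<cdot> k2) \<and> dom u2 = dom h \<and> (k1 \<cdot> k2) \<cdot> u2 = h" by (rule ex)
      fix v assume v: "cod v = dom (k1 \<cdot> k2) \<and> dom v = dom h \<and> (k1 \<cdot> k2) \<cdot> v = h"
      show "v = u2" by (rule mono_unique[OF m]) (use v ex in simp_all)
    qed
  qed
  thus ?thesis unfolding jker_def by (rule someI)
qed

lemma jcokernel_ex: assumes d: "cod v = cod u" shows "is_jcokernel C u v (jcoker C u v)"
proof -
  define c1 where "c1 = coker C u"
  define c2 where "c2 = coker C (c1 \<cdot> v)"
  have K1: "is_cokernel C u c1" unfolding c1_def by (rule coker_ex)
  have K2: "is_cokernel C (c1 \<cdot> v) c2" unfolding c2_def by (rule coker_ex)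
  have c1: "dom c1 = cod u" using cokernel_dom[OF K1] .
  have c2: "dom c2 = cod c1" using cokernel_dom[OF K2] c1 d by simp
  have m: "is_epi C (c2 \<cdot> c1)" using epi_comp[OF cokernel_epi[OF K2] cokernel_epi[OF K1]] c2 by simp
  have "is_jcokernel C u v (c2 \<cdot> c1)"
    unfolding is_jcokernel_def
  proof (intro conjI allI impI)
    show "dom (c2 \<cdot> c1) = cod u" using c1 c2 by simp
    show "cod v = cod u" by (rule d)
    show "(c2 \<cdot> c1) \<cdot> u = zr (dom u) (cod (c2 \<cdot> c1))"
      using c1 c2 cokernel_zero[OF K1] by (simp add: assoc)
    have "(c2 \<cdot> c1) \<cdot> v = c2 \<cdot> (c1 \<cdot> v)" using c1 c2 d by (simp add: assoc)
    also have "\<dots> = zr (dom (c1 \<cdot> v)) (cod c2)" using cokernel_zero[OF K2] .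
    finally show "(c2 \<cdot> c1) \<cdot> v = zr (dom v) (cod (c2 \<cdot> c1))" using c1 c2 d by simp
    fix h assume h: "dom h = cod u \<and> h \<cdot> u = zr (dom u) (cod h) \<and> h \<cdot> v = zr (dom v) (cod h)"
    obtain u1 where u1: "dom u1 = cod c1" "cod u1 = cod h" "u1 \<cdot> c1 = h"
      using cokernel_desc[OF K1] h by blast
    have "u1 \<cdot> (c1 \<cdot> v) = zr (dom (c1 \<cdot> v)) (cod u1)"
      using h u1 c1 d by (simp add: assoc[symmetric])
    then obtain u2 where u2: "dom u2 = cod c2" "cod u2 = cod u1" "u2 \<cdot> c2 = u1"
      using cokernel_desc[OF K2, of u1] u1 c1 d by auto
    have ex: "dom u2 = cod (c2 \<cdot> c1) \<and> cod u2 = cod h \<and> u2 \<cdot> (c2 \<cdot> c1) = h"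
      using u1 u2 c1 c2 by (simp add: assoc[symmetric])
    show "\<exists>!t. dom t = cod (c2 \<cdot> c1) \<and> cod t = cod h \<and> t \<cdot> (c2 \<cdot> c1) = h"
    proof (rule ex1I[of _ u2])
      show "dom u2 = cod (c2 \<cdot> c1) \<and> cod u2 = cod h \<and> u2 \<cdot> (c2 \<cdot> c1) = h" by (rule ex)
      fix t assume t: "dom t = cod (c2 \<cdot> c1) \<and> cod t = cod h \<and> t \<cdot> (c2 \<cdot> c1) = h"
      show "t = u2" by (rule epi_unique[OF m]) (use t ex in simp_all)
    qed
  qed
  thus ?thesis unfolding jcoker_def by (rule someI)
qed

end

context abc begin

lemma img_epi:
  assumes c: "is_cokernel C f c" and i: "is_kernel C c \<iota>" and fd: "cod f'' = dom \<iota>"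
    and fe: "\<iota> \<cdot> f'' = f"
  shows "is_epi C f''"
proof (rule epiI)
  fix t assume t: "dom t = cod f''" "t \<cdot> f'' = zr (dom f'') (cod t)"
  define \<kappa> where "\<kappa> = ker C t"
  have K: "is_kernel C t \<kappa>" unfolding \<kappa>_def by (rule ker_ex)
  have ck: "cod \<kappa> = dom \<iota>" using kernel_cod[OF K] t fd by simp
  obtain f3 where f3: "cod f3 = dom \<kappa>" "dom f3 = dom f''" "\<kappa> \<cdot> f3 = f''"
    using kernel_lift[OF K, of f''] t by auto
  have m: "is_mono C (\<iota> \<cdot> \<kappa>)" using mono_comp[OF kernel_mono[OF i] kernel_mono[OF K]] ck by simp
  obtain s where s: "is_kernel C s (\<iota> \<cdot> \<kappa>)" using normal_mono[OF m] by blast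
  have ds: "dom s = cod \<iota>" using kernel_cod[OF s] ck by simp
  have ci: "cod \<iota> = dom c" using kernel_cod[OF i] .
  have dc: "dom c = cod f" using cokernel_dom[OF c] .
  have "s \<cdot> f = s \<cdot> ((\<iota> \<cdot> \<kappa>) \<cdot> f3)" using fe f3 ck by (simp add: assoc)
  also have "\<dots> = (s \<cdot> (\<iota> \<cdot> \<kappa>)) \<cdot> f3" using ds ck f3 by (simp add: assoc)
  also have "\<dots> = zr (dom f3) (cod s)" using kernel_zero[OF s] f3 ck by simp
  finally have sf: "s \<cdot> f = zr (dom f) (cod s)" using fe f3 fd by (metis comp_dom)
  obtain s' where s': "dom s' = cod c" "cod s' = cod s" "s' \<cdot> c = s"
    using cokernel_desc[OF c, of s] sf ds ci dc by auto
  have "s \<cdot> \<iota> = s' \<cdot> (c \<cdot> \<iota>)" using s' ci by (simp add: assoc[symmetric])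
  also have "\<dots> = zr (dom \<iota>) (cod s)" using kernel_zero[OF i] s' by simp
  finally have si: "s \<cdot> \<iota> = zr (dom \<iota>) (cod s)" .
  obtain v where v: "cod v = dom (\<iota> \<cdot> \<kappa>)" "dom v = dom \<iota>" "(\<iota> \<cdot> \<kappa>) \<cdot> v = \<iota>"
    using kernel_lift[OF s, of \<iota>] si ds by auto
  have "\<kappa> \<cdot> v = Idm C (dom \<iota>)"
  proof (rule mono_unique[OF kernel_mono[OF i]])
    show "\<iota> \<cdot> \<kappa> \<cdot> v = \<iota> \<cdot> Idm C (dom \<iota>)" using v ck by (simp add: assoc)
  qed (use v ck in simp_all)
  hence "t = (t \<cdot> \<kappa>) \<cdot> v" using v ck t fd by (simp add: assoc)
  also have "\<dots> = zr (dom v) (cod t)" using kernel_zero[OF K] v ck by simp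
  finally show "t = zr (cod f'') (cod t)" using v fd by simp
qed

lemma lift:
  assumes e: "is_epi C e" and y: "cod y = cod e"
  shows "\<exists>u a. is_epi C u \<and> cod u = dom y \<and> dom a = dom u \<and> cod a = dom e \<and> e \<cdot> a = y \<cdot> u"
proof -
  obtain S p1 p2 i1 i2 where bp:
    "p1 \<in> hom C S (dom e)" "p2 \<in> hom C S (dom y)" "i1 \<in> hom C (dom e) S" "i2 \<in> hom C (dom y) S"
    "p1 \<cdot> i1 = Idm C (dom e)" "p2 \<cdot> i2 = Idm C (dom y)"
    "p1 \<cdot> i2 = zr (dom y) (dom e)" "p2 \<cdot> i1 = zr (dom e) (dom y)"
    using addi unfolding is_additive_def by blast
  have ty: "dom p1 = S" "cod p1 = dom e" "dom p2 = S" "cod p2 = dom y"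
     "dom i1 = dom e" "cod i1 = S" "dom i2 = dom y" "cod i2 = S"
    using bp(1-4) unfolding hom_def by auto
  define \<phi> where "\<phi> = ad (e \<cdot> p1) ((ng y) \<cdot> p2)"
  have tphi: "dom \<phi> = S" "cod \<phi> = cod e" unfolding \<phi>_def using ty y by simp_all
  have phi1: "\<phi> \<cdot> i1 = e"
  proof -
    have "\<phi> \<cdot> i1 = ad ((e \<cdot> p1) \<cdot> i1) (((ng y) \<cdot> p2) \<cdot> i1)" unfolding \<phi>_def
      using ty y by (simp add: distr_r)
    also have "(e \<cdot> p1) \<cdot> i1 = e" using ty bp(5) by (simp add: assoc)
    also have "((ng y) \<cdot> p2) \<cdot> i1 = zr (dom e) (cod e)" using ty bp(8) y by (simp add: assoc)
    finally show ?thesis by (simp add: ad_zr)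
  qed
  have ephi: "is_epi C \<phi>"
  proof (rule epiI)
    fix t assume t: "dom t = cod \<phi>" "t \<cdot> \<phi> = zr (dom \<phi>) (cod t)"
    have "t \<cdot> e = (t \<cdot> \<phi>) \<cdot> i1" using phi1 t(1) tphi ty by (simp add: assoc)
    also have "\<dots> = zr (dom e) (cod t)" using t tphi ty by simp
    finally have "t = zr (cod e) (cod t)" using t tphi by - (rule epi_cancel[OF e], simp_all)
    thus "t = zr (cod \<phi>) (cod t)" using tphi by simp
  qed
  define k where "k = ker C \<phi>"
  have K: "is_kernel C \<phi> k" unfolding k_def by (rule ker_ex)
  have ck: "cod k = S" using kernel_cod[OF K] tphi by simp
  define u where "u = p2 \<cdot> k"
  define a where "a = p1 \<cdot> k"
  have tu: "dom u = dom k" "cod u = dom y" "dom a = dom k" "cod a = dom e"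
    unfolding u_def a_def using ty ck by simp_all
  have eq: "e \<cdot> a = y \<cdot> u"
  proof -
    have "zr (dom k) (cod e) = \<phi> \<cdot> k" using kernel_zero[OF K] tphi by simp
    also have "\<dots> = ad ((e \<cdot> p1) \<cdot> k) (((ng y) \<cdot> p2) \<cdot> k)" unfolding \<phi>_def
      using ty y ck by (simp add: distr_r)
    also have "\<dots> = ad (e \<cdot> a) (ng (y \<cdot> u))" unfolding a_def u_def using ty y ck
      by (simp add: assoc ng_comp)
    finally have z1: "ad (e \<cdot> a) (ng (y \<cdot> u)) = zr (dom k) (cod e)" by simp
    show ?thesis by (rule sub_zero) (use z1 tu y in simp_all)
  qed
  have eu: "is_epi C u"
  proof (rule epiI)
    fix t assume t: "dom t = cod u" "t \<cdot> u = zr (dom u) (cod t)"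
    obtain s where s: "dom s = cod \<phi>" "cod s = cod (t \<cdot> p2)" "s \<cdot> \<phi> = t \<cdot> p2"
    proof -
      have "\<exists>s. dom s = cod \<phi> \<and> cod s = cod (t \<cdot> p2) \<and> s \<cdot> \<phi> = t \<cdot> p2"
      proof (rule epi_desc[OF ephi])
        show "dom (t \<cdot> p2) = dom \<phi>" using t tu ty tphi by simp
        fix n assume n: "cod n = dom \<phi>" "\<phi> \<cdot> n = zr (dom n) (cod \<phi>)"
        obtain n' where n': "cod n' = dom k" "dom n' = dom n" "k \<cdot> n' = n"
          using kernel_lift[OF K, of n] n by auto
        have "(t \<cdot> p2) \<cdot> n = (t \<cdot> u) \<cdot> n'" unfolding u_def n'(3)[symmetric]
          using n'(1) t(1) tu ty ck by (simp add: assoc)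
        also have "\<dots> = zr (dom n) (cod (t \<cdot> p2))" using t tu n' ty by simp
        finally show "(t \<cdot> p2) \<cdot> n = zr (dom n) (cod (t \<cdot> p2))" .
      qed
      thus ?thesis using that by blast
    qed
    have "s \<cdot> e = (s \<cdot> \<phi>) \<cdot> i1" using s(1) phi1 tphi ty by (simp add: assoc)
    also have "\<dots> = (t \<cdot> p2) \<cdot> i1" using s(3) by simp
    also have "\<dots> = zr (dom e) (cod s)" using bp(8) t tu ty s by (simp add: assoc)
    finally have "s = zr (cod e) (cod s)" by - (rule epi_cancel[OF e], use s tphi in simp_all)
    hence tp: "t \<cdot> p2 = zr S (cod t)" using s tphi t tu ty by simp
    have "t = (t \<cdot> p2) \<cdot> i2" using bp(6) t tu ty by (simp add: assoc)
    also have "\<dots> = zr (cod u) (cod t)" using tp ty tu by simp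
    finally show "t = zr (cod u) (cod t)" .
  qed
  show ?thesis by (rule exI[of _ u], rule exI[of _ a]) (use eu tu eq in simp)
qed

end

context abc begin

lemma ad_sub_cancel: "dom a = dom b \<Longrightarrow> cod a = cod b \<Longrightarrow> ad (ad a (ng b)) b = a"
proof -
  assume h: "dom a = dom b" "cod a = cod b"
  have "ad (ad a (ng b)) b = ad a (ad (ng b) b)" by (rule ad_assoc) (use h in simp_all)
  also have "ad (ng b) b = zr (dom b) (cod b)" using ad_comm[of "ng b" b] by (simp add: ad_ng)
  finally show ?thesis using h ad_zr[of a "dom b" "cod b"] by simp
qed

lemma comp_ng: assumes h: "dom m = cod h" shows "m \<cdot> (ng h) = ng (m \<cdot> h)"
proof -
  have a1: "ad (m \<cdot> ng h) (m \<cdot> h) = zr (dom h) (cod m)"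
  proof -
    have "ad (m \<cdot> ng h) (m \<cdot> h) = m \<cdot> ad (ng h) h" using h by (simp add: distr_l)
    also have "ad (ng h) h = zr (dom h) (cod h)" using ad_comm[of "ng h" h] by (simp add: ad_ng)
    finally show ?thesis using h by simp
  qed
  have a2: "ad (ng (m \<cdot> h)) (m \<cdot> h) = zr (dom h) (cod m)"
    using h ad_comm[of "ng (m \<cdot> h)" "m \<cdot> h"] by (simp add: ad_ng)
  show ?thesis by (rule inv_unique[of _ "m \<cdot> h"]) (use h a1 a2 in simp_all)
qed

lemma main:
  assumes tg: "dom e' = cod g" "dom fB = cod g" "cod d = dom g" "cod c = dom g"
    and gd: "g \<cdot> d = zr (dom d) (cod g)"
    and eg: "e' \<cdot> g = zr (dom g) (cod e')"
    and qc: "(fB \<cdot> g) \<cdot> c = zr (dom c) (cod fB)"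
    and exA: "is_zero_obj C (cod (coker C (factor C (ker C g) d)))"
    and exB: "is_zero_obj C (cod (coker C (factor C (ker C e') g)))"
    and K: "is_kernel C (fB \<cdot> g) k"
    and P0: "\<pi> = jcoker C (factor C k c) (factor C k d) \<or> \<pi> = jcoker C (factor C k d) (factor C k c)"
    and J0: "j = jker C e' fB \<or> j = jker C fB e'"
    and R: "\<rho> = coker C (factor C j (g \<cdot> c))"
  shows "is_iso C (SOME m. dom m = cod \<pi> \<and> cod m = cod \<rho> \<and>
            m \<cdot> \<pi> = \<rho> \<cdot> factor C j (g \<cdot> k))"
proof -
  have J: "is_jkernel C e' fB j"
    using J0 jkernel_ex[of fB e'] jkernel_ex[of e' fB] jkernel_sym tg by auto
  have ck: "cod k = dom g" using kernel_cod[OF K] tg by simp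
  have mk: "is_mono C k" by (rule kernel_mono[OF K])
  have cj: "cod j = cod g" using jkernel_cod[OF J] tg by simp
  have mj: "is_mono C j" by (rule jkernel_mono[OF J])
  have e'j: "e' \<cdot> j = zr (dom j) (cod e')" by (rule jkernel_zero1[OF J])
  have fj: "fB \<cdot> j = zr (dom j) (cod fB)" by (rule jkernel_zero2[OF J])
  have fgk: "fB \<cdot> (g \<cdot> k) = zr (dom k) (cod fB)"
    using kernel_zero[OF K] tg ck by (simp add: assoc)
  define c' where "c' = factor C k c"
  define d' where "d' = factor C k d"
  have C': "cod c' = dom k" "dom c' = dom c" "k \<cdot> c' = c"
  proof -
    have "\<exists>u. cod u = dom k \<and> dom u = dom c \<and> k \<cdot> u = c"
      by (rule kernel_lift[OF K]) (use tg qc in \<open>simp_all add: assoc\<close>)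
    from factor_prop[OF this] show "cod c' = dom k" "dom c' = dom c" "k \<cdot> c' = c"
      unfolding c'_def by auto
  qed
  have D': "cod d' = dom k" "dom d' = dom d" "k \<cdot> d' = d"
  proof -
    have "\<exists>u. cod u = dom k \<and> dom u = dom d \<and> k \<cdot> u = d"
      by (rule kernel_lift[OF K]) (use tg gd in \<open>simp_all add: assoc\<close>)
    from factor_prop[OF this] show "cod d' = dom k" "dom d' = dom d" "k \<cdot> d' = d"
      unfolding d'_def by auto
  qed
  have P': "is_jcokernel C c' d' \<pi>"
    using P0 jcokernel_ex[of d' c'] jcokernel_ex[of c' d'] jcokernel_sym C' D'
    unfolding c'_def[symmetric] d'_def[symmetric] by auto
  have dpi: "dom \<pi> = dom k" using jcokernel_dom[OF P'] C' by simp
  have epi_pi: "is_epi C \<pi>" by (rule jcokernel_epi[OF P'])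
  define w where "w = factor C j (g \<cdot> k)"
  have W: "cod w = dom j" "dom w = dom k" "j \<cdot> w = g \<cdot> k"
  proof -
    have "\<exists>u. cod u = dom j \<and> dom u = dom (g \<cdot> k) \<and> j \<cdot> u = g \<cdot> k"
      by (rule jkernel_lift[OF J]) (use tg ck eg fgk in \<open>simp_all add: assoc[symmetric]\<close>)
    from factor_prop[OF this] show "cod w = dom j" "dom w = dom k" "j \<cdot> w = g \<cdot> k"
      unfolding w_def using ck by auto
  qed
  define p' where "p' = factor C j (g \<cdot> c)"
  have P2: "cod p' = dom j" "dom p' = dom c" "j \<cdot> p' = g \<cdot> c"
  proof -
    have "\<exists>u. cod u = dom j \<and> dom u = dom (g \<cdot> c) \<and> j \<cdot> u = g \<cdot> c"
      by (rule jkernel_lift[OF J]) (use tg eg qc in \<open>simp_all add: assoc[symmetric]\<close>)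
    from factor_prop[OF this] show "cod p' = dom j" "dom p' = dom c" "j \<cdot> p' = g \<cdot> c"
      unfolding p'_def using tg by auto
  qed
  have RC: "is_cokernel C p' \<rho>" unfolding R p'_def by (rule coker_ex)
  have drho: "dom \<rho> = dom j" using cokernel_dom[OF RC] P2 by simp
  have epi_rho: "is_epi C \<rho>" by (rule cokernel_epi[OF RC])
  have epi_w: "is_epi C w"
  proof -
    define \<kappa> where "\<kappa> = ker C e'"
    have KE: "is_kernel C e' \<kappa>" unfolding \<kappa>_def by (rule ker_ex)
    define gb where "gb = factor C \<kappa> g"
    have GB: "cod gb = dom \<kappa>" "dom gb = dom g" "\<kappa> \<cdot> gb = g"
    proof -
      have "\<exists>u. cod u = dom \<kappa> \<and> dom u = dom g \<and> \<kappa> \<cdot> u = g"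
        by (rule kernel_lift[OF KE]) (use tg eg in simp_all)
      from factor_prop[OF this] show "cod gb = dom \<kappa>" "dom gb = dom g" "\<kappa> \<cdot> gb = g"
        unfolding gb_def by auto
    qed
    have epi_gb: "is_epi C gb"
      by (rule zero_coker_epi[OF coker_ex]) (use exB in \<open>simp add: gb_def \<kappa>_def\<close>)
    obtain j1 where j1: "cod j1 = dom \<kappa>" "dom j1 = dom j" "\<kappa> \<cdot> j1 = j"
      using kernel_lift[OF KE, of j] e'j cj tg by auto
    obtain u a where ua: "is_epi C u" "cod u = dom j1" "dom a = dom u" "cod a = dom gb"
        "gb \<cdot> a = j1 \<cdot> u"
      using lift[OF epi_gb, of j1] j1 GB by auto
    have ck2: "cod \<kappa> = cod g" using kernel_cod[OF KE] tg by simp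
    have ga: "g \<cdot> a = j \<cdot> u"
    proof -
      have "g \<cdot> a = \<kappa> \<cdot> (gb \<cdot> a)" using GB ua(4) by (simp add: assoc[symmetric])
      also have "\<dots> = \<kappa> \<cdot> (j1 \<cdot> u)" using ua(5) by simp
      also have "\<dots> = (\<kappa> \<cdot> j1) \<cdot> u" using ua(2) j1(1,2) by (simp add: assoc)
      finally show ?thesis using j1 by simp
    qed
    have "(fB \<cdot> g) \<cdot> a = zr (dom a) (cod (fB \<cdot> g))"
    proof -
      have "(fB \<cdot> g) \<cdot> a = fB \<cdot> (j \<cdot> u)" using tg ua GB ga by (simp add: assoc)
      also have "\<dots> = (fB \<cdot> j) \<cdot> u" using tg cj ua j1 by (simp add: assoc)
      finally show ?thesis using fj ua j1 tg by simp
    qed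
    then obtain a' where a': "cod a' = dom k" "dom a' = dom a" "k \<cdot> a' = a"
      using kernel_lift[OF K, of a] ua GB tg by auto
    have "w \<cdot> a' = u"
    proof (rule mono_unique[OF mj])
      have "j \<cdot> (w \<cdot> a') = (g \<cdot> k) \<cdot> a'" using W a' by (simp add: assoc[symmetric])
      also have "\<dots> = g \<cdot> a" using a' ck by (simp add: assoc)
      finally show "j \<cdot> (w \<cdot> a') = j \<cdot> u" using ga by simp
    qed (use W a' ua j1 in simp_all)
    hence "is_epi C (w \<cdot> a')" using ua by simp
    thus ?thesis by (rule epi_left) (use W a' in simp)
  qed
  have epi_rw: "is_epi C (\<rho> \<cdot> w)" by (rule epi_comp[OF epi_rho epi_w]) (use drho W in simp)
  have kill: "\<pi> \<cdot> n = zr (dom n) (cod \<pi>)"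
    if n: "cod n = dom (\<rho> \<cdot> w)" "(\<rho> \<cdot> w) \<cdot> n = zr (dom n) (cod (\<rho> \<cdot> w))" for n
  proof -
    have cn: "cod n = dom k" using n(1) drho W by simp
    have rwn: "\<rho> \<cdot> (w \<cdot> n) = zr (dom (w \<cdot> n)) (cod \<rho>)"
      using n drho W cn by (simp add: assoc)
    define \<iota> where "\<iota> = ker C \<rho>"
    have IK: "is_kernel C \<rho> \<iota>" unfolding \<iota>_def by (rule ker_ex)
    have ci: "cod \<iota> = dom j" using kernel_cod[OF IK] drho by simp
    obtain y where y: "cod y = dom \<iota>" "dom y = dom n" "\<iota> \<cdot> y = w \<cdot> n"
      using kernel_lift[OF IK, of "w \<cdot> n"] rwn W cn drho by auto
    define pb where "pb = factor C \<iota> p'"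
    have PB: "cod pb = dom \<iota>" "dom pb = dom p'" "\<iota> \<cdot> pb = p'"
    proof -
      have "\<exists>u. cod u = dom \<iota> \<and> dom u = dom p' \<and> \<iota> \<cdot> u = p'"
        by (rule kernel_lift[OF IK]) (use P2 drho cokernel_zero[OF RC] in simp_all)
      from factor_prop[OF this] show "cod pb = dom \<iota>" "dom pb = dom p'" "\<iota> \<cdot> pb = p'"
        unfolding pb_def by auto
    qed
    have epi_pb: "is_epi C pb" by (rule img_epi[OF RC IK PB(1) PB(3)])
    obtain u z where uz: "is_epi C u" "cod u = dom y" "dom z = dom u" "cod z = dom pb"
        "pb \<cdot> z = y \<cdot> u"
      using lift[OF epi_pb, of y] y PB by auto
    have eq1: "w \<cdot> (n \<cdot> u) = p' \<cdot> z"
    proof -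
      have "w \<cdot> (n \<cdot> u) = (w \<cdot> n) \<cdot> u" using W cn uz y by (simp add: assoc)
      also have "\<dots> = (\<iota> \<cdot> y) \<cdot> u" using y(3) by simp
      also have "\<dots> = \<iota> \<cdot> (y \<cdot> u)" using y(1) uz(2) by (simp add: assoc)
      also have "\<dots> = \<iota> \<cdot> (pb \<cdot> z)" using uz(5) by simp
      also have "\<dots> = (\<iota> \<cdot> pb) \<cdot> z" using PB(1) uz(4) by (simp add: assoc)
      finally show ?thesis using PB(3) by simp
    qed
    have eq2: "g \<cdot> (k \<cdot> (n \<cdot> u)) = g \<cdot> (c \<cdot> z)"
    proof -
      have "g \<cdot> (k \<cdot> (n \<cdot> u)) = (g \<cdot> k) \<cdot> (n \<cdot> u)" using ck cn uz y by (simp add: assoc)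
      also have "\<dots> = (j \<cdot> w) \<cdot> (n \<cdot> u)" using W(3) by simp
      also have "\<dots> = j \<cdot> (w \<cdot> (n \<cdot> u))" using W(1,2) cn uz(2) y(2) by (simp add: assoc)
      also have "\<dots> = j \<cdot> (p' \<cdot> z)" using eq1 by simp
      also have "\<dots> = (j \<cdot> p') \<cdot> z" using P2(1,2) uz(4) PB(2) by (simp add: assoc)
      also have "\<dots> = (g \<cdot> c) \<cdot> z" using P2(3) by simp
      also have "\<dots> = g \<cdot> (c \<cdot> z)" using tg P2 uz PB by (simp add: assoc)
      finally show ?thesis .
    qed
    have tz: "dom (c \<cdot> z) = dom u" "cod (c \<cdot> z) = dom g" using tg P2 uz PB by simp_all
    have tk: "dom (k \<cdot> (n \<cdot> u)) = dom u" "cod (k \<cdot> (n \<cdot> u)) = dom g" using ck cn uz y by simp_all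
    define \<delta> where "\<delta> = ad (k \<cdot> (n \<cdot> u)) (ng (c \<cdot> z))"
    have td: "dom \<delta> = dom u" "cod \<delta> = dom g" unfolding \<delta>_def using tz tk by simp_all
    have gdel: "g \<cdot> \<delta> = zr (dom \<delta>) (cod g)"
    proof -
      have "g \<cdot> \<delta> = ad (g \<cdot> (k \<cdot> (n \<cdot> u))) (g \<cdot> ng (c \<cdot> z))" unfolding \<delta>_def
        using tz tk by (simp add: distr_l)
      also have "\<dots> = ad (g \<cdot> (c \<cdot> z)) (ng (g \<cdot> (c \<cdot> z)))" using eq2 tz by (simp add: comp_ng)
      finally show ?thesis using tz td by (simp add: ad_ng)
    qed
    define \<kappa>g where "\<kappa>g = ker C g"
    have KG: "is_kernel C g \<kappa>g" unfolding \<kappa>g_def by (rule ker_ex)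
    have ckg: "cod \<kappa>g = dom g" using kernel_cod[OF KG] .
    obtain v where v: "cod v = dom \<kappa>g" "dom v = dom u" "\<kappa>g \<cdot> v = \<delta>"
      using kernel_lift[OF KG, of \<delta>] gdel td by auto
    define db where "db = factor C \<kappa>g d"
    have DB: "cod db = dom \<kappa>g" "dom db = dom d" "\<kappa>g \<cdot> db = d"
    proof -
      have "\<exists>u. cod u = dom \<kappa>g \<and> dom u = dom d \<and> \<kappa>g \<cdot> u = d"
        by (rule kernel_lift[OF KG]) (use tg gd in simp_all)
      from factor_prop[OF this] show "cod db = dom \<kappa>g" "dom db = dom d" "\<kappa>g \<cdot> db = d"
        unfolding db_def by auto
    qed
    have epi_db: "is_epi C db"
      by (rule zero_coker_epi[OF coker_ex]) (use exA in \<open>simp add: db_def \<kappa>g_def\<close>)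
    obtain u2 x where ux: "is_epi C u2" "cod u2 = dom v" "dom x = dom u2" "cod x = dom db"
        "db \<cdot> x = v \<cdot> u2"
      using lift[OF epi_db, of v] v DB by auto
    have du2: "\<delta> \<cdot> u2 = d \<cdot> x"
    proof -
      have "\<delta> \<cdot> u2 = \<kappa>g \<cdot> (v \<cdot> u2)" using v(1,3)[symmetric] ux(2) by (simp add: assoc)
      also have "\<dots> = \<kappa>g \<cdot> (db \<cdot> x)" using ux(5) by simp
      also have "\<dots> = (\<kappa>g \<cdot> db) \<cdot> x" using DB(1) ux(4) by (simp add: assoc)
      finally show ?thesis using DB(3) by simp
    qed
    have nuu: "(n \<cdot> u) \<cdot> u2 = ad (d' \<cdot> x) (c' \<cdot> (z \<cdot> u2))"
    proof (rule mono_unique[OF mk])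
      have "k \<cdot> ((n \<cdot> u) \<cdot> u2) = (k \<cdot> (n \<cdot> u)) \<cdot> u2" using cn uz y ux v td
        by (simp add: assoc)
      also have "k \<cdot> (n \<cdot> u) = ad \<delta> (c \<cdot> z)" unfolding \<delta>_def
        by (rule ad_sub_cancel[symmetric]) (use tz tk in simp_all)
      also have "(ad \<delta> (c \<cdot> z)) \<cdot> u2 = ad (\<delta> \<cdot> u2) ((c \<cdot> z) \<cdot> u2)"
        using td tz ux v by (simp add: distr_r)
      also have "\<dots> = ad (d \<cdot> x) (c \<cdot> (z \<cdot> u2))" using du2 tg P2 PB uz ux v td
        by (simp add: assoc)
      also have "\<dots> = ad (k \<cdot> (d' \<cdot> x)) (k \<cdot> (c' \<cdot> (z \<cdot> u2)))"
        using D' C' DB ux PB P2 uz v td by (simp add: assoc[symmetric])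
      also have "\<dots> = k \<cdot> ad (d' \<cdot> x) (c' \<cdot> (z \<cdot> u2))"
        using D' C' DB ux PB P2 uz v td tz by (simp add: distr_l)
      finally show "k \<cdot> ((n \<cdot> u) \<cdot> u2) = k \<cdot> ad (d' \<cdot> x) (c' \<cdot> (z \<cdot> u2))" .
    qed (use cn uz y ux v td D' C' DB PB P2 in simp_all)
    have "(\<pi> \<cdot> n) \<cdot> (u \<cdot> u2) = zr (dom (u \<cdot> u2)) (cod (\<pi> \<cdot> n))"
    proof -
      have "(\<pi> \<cdot> n) \<cdot> (u \<cdot> u2) = \<pi> \<cdot> ((n \<cdot> u) \<cdot> u2)" using dpi cn uz y ux v td
        by (simp add: assoc)
      also have "\<dots> = ad (\<pi> \<cdot> (d' \<cdot> x)) (\<pi> \<cdot> (c' \<cdot> (z \<cdot> u2)))" unfolding nuu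
        using D' C' DB ux PB P2 uz v td tz dpi by (simp add: distr_l)
      also have "\<pi> \<cdot> (d' \<cdot> x) = (\<pi> \<cdot> d') \<cdot> x" using D' DB ux dpi by (simp add: assoc)
      also have "\<pi> \<cdot> (c' \<cdot> (z \<cdot> u2)) = (\<pi> \<cdot> c') \<cdot> (z \<cdot> u2)" using C' PB P2 uz ux v td dpi
        by (simp add: assoc)
      finally show ?thesis using jcokernel_zero1[OF P'] jcokernel_zero2[OF P'] D' C' DB ux PB P2 uz v td dpi cn
        by (simp add: ad_zr)
    qed
    moreover have "is_epi C (u \<cdot> u2)" by (rule epi_comp[OF uz(1) ux(1)]) (use ux v td in simp)
    ultimately have "\<pi> \<cdot> n = zr (cod (u \<cdot> u2)) (cod (\<pi> \<cdot> n))"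
      by - (rule epi_cancel, simp_all, use dpi cn uz y ux v td in simp)
    thus ?thesis using dpi cn uz y ux(2) v(2) by simp
  qed
  have wc: "w \<cdot> c' = p'"
  proof (rule mono_unique[OF mj])
    have "j \<cdot> (w \<cdot> c') = (j \<cdot> w) \<cdot> c'" using W(1,2) C' by (simp add: assoc)
    also have "\<dots> = (g \<cdot> k) \<cdot> c'" using W(3) by simp
    also have "\<dots> = g \<cdot> (k \<cdot> c')" using C'(1) ck by (simp add: assoc)
    finally show "j \<cdot> (w \<cdot> c') = j \<cdot> p'" using C'(3) P2(3) by simp
  qed (use W C' P2 in simp_all)
  have wd: "w \<cdot> d' = zr (dom d') (dom j)"
  proof (rule mono_unique[OF mj])
    have "j \<cdot> (w \<cdot> d') = (j \<cdot> w) \<cdot> d'" using W(1,2) D' by (simp add: assoc)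
    also have "\<dots> = (g \<cdot> k) \<cdot> d'" using W(3) by simp
    also have "\<dots> = g \<cdot> (k \<cdot> d')" using D'(1) ck by (simp add: assoc)
    finally show "j \<cdot> (w \<cdot> d') = j \<cdot> zr (dom d') (dom j)" using D'(2,3) gd cj by simp
  qed (use W D' in simp_all)
  have ex_m: "\<exists>m. dom m = cod \<pi> \<and> cod m = cod \<rho> \<and> m \<cdot> \<pi> = \<rho> \<cdot> w"
  proof -
    have "\<exists>t. dom t = cod \<pi> \<and> cod t = cod (\<rho> \<cdot> w) \<and> t \<cdot> \<pi> = \<rho> \<cdot> w"
    proof (rule jcokernel_desc[OF P'])
      show "dom (\<rho> \<cdot> w) = cod c'" using drho W C' by simp
      have "(\<rho> \<cdot> w) \<cdot> c' = \<rho> \<cdot> (w \<cdot> c')" using drho W C' by (simp add: assoc)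
      thus "(\<rho> \<cdot> w) \<cdot> c' = zr (dom c') (cod (\<rho> \<cdot> w))"
        using wc cokernel_zero[OF RC] drho W C' P2 by simp
      have "(\<rho> \<cdot> w) \<cdot> d' = \<rho> \<cdot> (w \<cdot> d')" using drho W D' by (simp add: assoc)
      thus "(\<rho> \<cdot> w) \<cdot> d' = zr (dom d') (cod (\<rho> \<cdot> w))"
        using wd drho W D' by simp
    qed
    thus ?thesis using drho W by simp
  qed
  define m where "m = (SOME m. dom m = cod \<pi> \<and> cod m = cod \<rho> \<and>
            m \<cdot> \<pi> = \<rho> \<cdot> factor C j (g \<cdot> k))"
  have M: "dom m = cod \<pi> \<and> cod m = cod \<rho> \<and> m \<cdot> \<pi> = \<rho> \<cdot> w"
    unfolding m_def w_def[symmetric] by (rule someI_ex[OF ex_m])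
  obtain n0 where N: "dom n0 = cod (\<rho> \<cdot> w)" "cod n0 = cod \<pi>" "n0 \<cdot> (\<rho> \<cdot> w) = \<pi>"
    using epi_desc[OF epi_rw, of \<pi>] kill dpi drho W by auto
  have "is_iso C m"
    unfolding is_iso_def
  proof (rule exI[of _ n0], intro conjI)
    show "n0 \<in> hom C (cod m) (dom m)" using N M drho W unfolding hom_def by simp
    show "n0 \<cdot> m = Idm C (dom m)"
    proof (rule epi_unique[OF epi_pi])
      have "(n0 \<cdot> m) \<cdot> \<pi> = n0 \<cdot> (m \<cdot> \<pi>)" using N M drho W by (simp add: assoc)
      thus "(n0 \<cdot> m) \<cdot> \<pi> = Idm C (dom m) \<cdot> \<pi>" using N M by simp
    qed (use N M drho W in simp_all)
    show "m \<cdot> n0 = Idm C (cod m)"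
    proof (rule epi_unique[OF epi_rw])
      have "(m \<cdot> n0) \<cdot> (\<rho> \<cdot> w) = m \<cdot> (n0 \<cdot> (\<rho> \<cdot> w))" using N M drho W by (simp add: assoc)
      thus "(m \<cdot> n0) \<cdot> (\<rho> \<cdot> w) = Idm C (cod m) \<cdot> (\<rho> \<cdot> w)" using N M drho W by simp
    qed (use N M drho W in simp_all)
  qed
  thus ?thesis unfolding m_def .
qed

end


theorem corollary2p1:
  fixes C :: "('o, 'm) abcat"
    and X :: "int \<Rightarrow> int \<Rightarrow> 'o"
    and d1 d2 :: "int \<Rightarrow> int \<Rightarrow> 'm"
    and i r :: int
  assumes "is_abelian C"
    and "double_complex C X d1 d2"
  shows "(row_exact_at C d2 i r \<and> row_exact_at C d2 i (r + 1) \<longrightarrow>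
            is_iso C (extramural C d1 d2 i r i (r + 1) (d2 i r)))
       \<and> (col_exact_at C d1 i r \<and> col_exact_at C d1 (i + 1) r \<longrightarrow>
            is_iso C (extramural C d1 d2 i r (i + 1) r (d1 i r)))"
proof -
  interpret abc C by unfold_locales (rule assms(1))
  have h2: "\<And>i r. Dom C (d2 i r) = X i r \<and> Cod C (d2 i r) = X i (r + 1)"
    and v1: "\<And>i r. Dom C (d1 i r) = X i r \<and> Cod C (d1 i r) = X (i + 1) r"
    and hh: "\<And>i r. Comp C (d2 i (r + 1)) (d2 i r) = Zer C (X i r) (X i (r + 2))"
    and vv: "\<And>i r. Comp C (d1 (i + 1) r) (d1 i r) = Zer C (X i r) (X (i + 2) r)"
    and cm: "\<And>i r. Comp C (d1 i (r + 1)) (d2 i r) = Comp C (d2 (i + 1) r) (d1 i r)"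
    using assms(2) unfolding double_complex_def hom_def by auto
  have hh': "\<And>i r. Comp C (d2 i r) (d2 i (r - 1)) = Zer C (X i (r - 1)) (X i (r + 1))"
  proof -
    fix i r
    have e1: "r - 1 + 1 = r" and e2: "r - 1 + 2 = r + (1::int)" by simp_all
    show "Comp C (d2 i r) (d2 i (r - 1)) = Zer C (X i (r - 1)) (X i (r + 1))"
      using hh[of i "r - 1"] unfolding e1 e2 .
  qed
  have vv': "\<And>i r. Comp C (d1 i r) (d1 (i - 1) r) = Zer C (X (i - 1) r) (X (i + 1) r)"
  proof -
    fix i r
    have e1: "i - 1 + 1 = i" and e2: "i - 1 + 2 = i + (1::int)" by simp_all
    show "Comp C (d1 i r) (d1 (i - 1) r) = Zer C (X (i - 1) r) (X (i + 1) r)"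
      using vv[of "i - 1" r] unfolding e1 e2 .
  qed
  have hh2: "\<And>i r. Comp C (d2 i (r + 1)) (d2 i r) = Zer C (X i r) (X i (r + 1 + 1))"
    using hh by (simp add: add.assoc del: one_add_one)
  have vv2: "\<And>i r. Comp C (d1 (i + 1) r) (d1 i r) = Zer C (X i r) (X (i + 1 + 1) r)"
    using vv by (simp add: add.assoc del: one_add_one)
  show ?thesis
  proof (intro conjI impI)
    assume ex: "row_exact_at C d2 i r \<and> row_exact_at C d2 i (r + 1)"
    show "is_iso C (extramural C d1 d2 i r i (r + 1) (d2 i r))"
      unfolding extramural_def
    proof (rule main[where g = "d2 i r" and d = "d2 i (r - 1)" and c = "d1 (i - 1) r"
          and e' = "d2 i (r + 1)" and fB = "d1 i (r + 1)"])
      show "dom (d2 i (r + 1)) = cod (d2 i r)" using h2 by simp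
      show "dom (d1 i (r + 1)) = cod (d2 i r)" using h2 v1 by simp
      show "cod (d2 i (r - 1)) = dom (d2 i r)" using h2 by simp
      show "cod (d1 (i - 1) r) = dom (d2 i r)" using h2 v1 by simp
      show "d2 i r \<cdot> d2 i (r - 1) = zr (dom (d2 i (r - 1))) (cod (d2 i r))" using h2 hh' by simp
      show "d2 i (r + 1) \<cdot> d2 i r = zr (dom (d2 i r)) (cod (d2 i (r + 1)))" using h2 hh2 by simp
      have "(d1 i (r + 1) \<cdot> d2 i r) \<cdot> d1 (i - 1) r = (d2 (i + 1) r \<cdot> d1 i r) \<cdot> d1 (i - 1) r"
        using cm by simp
      also have "\<dots> = d2 (i + 1) r \<cdot> (d1 i r \<cdot> d1 (i - 1) r)" using h2 v1 by (simp add: assoc)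
      also have "\<dots> = zr (dom (d1 (i - 1) r)) (cod (d1 i (r + 1)))" using vv' h2 v1 by simp
      finally show "(d1 i (r + 1) \<cdot> d2 i r) \<cdot> d1 (i - 1) r = zr (dom (d1 (i - 1) r)) (cod (d1 i (r + 1)))" .
      show "is_zero_obj C (cod (coker C (factor C (ker C (d2 i r)) (d2 i (r - 1)))))"
        using ex unfolding row_exact_at_def Hh_proj_def by simp
      show "is_zero_obj C (cod (coker C (factor C (ker C (d2 i (r + 1))) (d2 i r))))"
        using ex unfolding row_exact_at_def Hh_proj_def by simp
      show "is_kernel C (d1 i (r + 1) \<cdot> d2 i r) (don_incl C d1 d2 i r)"
        unfolding don_incl_def by (rule ker_ex)
      show "don_proj C d1 d2 i r = jcoker C (factor C (don_incl C d1 d2 i r) (d1 (i - 1) r))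
          (factor C (don_incl C d1 d2 i r) (d2 i (r - 1))) \<or>
        don_proj C d1 d2 i r = jcoker C (factor C (don_incl C d1 d2 i r) (d2 i (r - 1)))
          (factor C (don_incl C d1 d2 i r) (d1 (i - 1) r))"
        unfolding don_proj_def by simp
      show "rec_incl C d1 d2 i (r + 1) = jker C (d2 i (r + 1)) (d1 i (r + 1)) \<or>
            rec_incl C d1 d2 i (r + 1) = jker C (d1 i (r + 1)) (d2 i (r + 1))"
        unfolding rec_incl_def by simp
      have "d1 (i - 1) (r + 1) \<cdot> d2 (i - 1) r = d2 i r \<cdot> d1 (i - 1) r"
        using cm[of "i - 1" r] by simp
      thus "rec_proj C d1 d2 i (r + 1) = coker C (factor C (rec_incl C d1 d2 i (r + 1)) (d2 i r \<cdot> d1 (i - 1) r))"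
        unfolding rec_proj_def by simp
    qed
  next
    assume ex: "col_exact_at C d1 i r \<and> col_exact_at C d1 (i + 1) r"
    show "is_iso C (extramural C d1 d2 i r (i + 1) r (d1 i r))"
      unfolding extramural_def
    proof (rule main[where g = "d1 i r" and d = "d1 (i - 1) r" and c = "d2 i (r - 1)"
          and e' = "d1 (i + 1) r" and fB = "d2 (i + 1) r"])
      show "dom (d1 (i + 1) r) = cod (d1 i r)" using v1 by simp
      show "dom (d2 (i + 1) r) = cod (d1 i r)" using h2 v1 by simp
      show "cod (d1 (i - 1) r) = dom (d1 i r)" using v1 by simp
      show "cod (d2 i (r - 1)) = dom (d1 i r)" using h2 v1 by simp
      show "d1 i r \<cdot> d1 (i - 1) r = zr (dom (d1 (i - 1) r)) (cod (d1 i r))" using v1 vv' by simp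
      show "d1 (i + 1) r \<cdot> d1 i r = zr (dom (d1 i r)) (cod (d1 (i + 1) r))" using v1 vv2 by simp
      have "(d2 (i + 1) r \<cdot> d1 i r) \<cdot> d2 i (r - 1) = (d1 i (r + 1) \<cdot> d2 i r) \<cdot> d2 i (r - 1)"
        using cm by simp
      also have "\<dots> = d1 i (r + 1) \<cdot> (d2 i r \<cdot> d2 i (r - 1))" using h2 v1 by (simp add: assoc)
      also have "\<dots> = zr (dom (d2 i (r - 1))) (cod (d2 (i + 1) r))" using hh' h2 v1 by simp
      finally show "(d2 (i + 1) r \<cdot> d1 i r) \<cdot> d2 i (r - 1) = zr (dom (d2 i (r - 1))) (cod (d2 (i + 1) r))" .
      show "is_zero_obj C (cod (coker C (factor C (ker C (d1 i r)) (d1 (i - 1) r))))"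
        using ex unfolding col_exact_at_def Hv_proj_def by simp
      show "is_zero_obj C (cod (coker C (factor C (ker C (d1 (i + 1) r)) (d1 i r))))"
        using ex unfolding col_exact_at_def Hv_proj_def by simp
      show "is_kernel C (d2 (i + 1) r \<cdot> d1 i r) (don_incl C d1 d2 i r)"
        unfolding don_incl_def cm by (rule ker_ex)
      show "don_proj C d1 d2 i r = jcoker C (factor C (don_incl C d1 d2 i r) (d2 i (r - 1)))
          (factor C (don_incl C d1 d2 i r) (d1 (i - 1) r)) \<or>
        don_proj C d1 d2 i r = jcoker C (factor C (don_incl C d1 d2 i r) (d1 (i - 1) r))
          (factor C (don_incl C d1 d2 i r) (d2 i (r - 1)))"
        unfolding don_proj_def by simp
      show "rec_incl C d1 d2 (i + 1) r = jker C (d1 (i + 1) r) (d2 (i + 1) r) \<or>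
            rec_incl C d1 d2 (i + 1) r = jker C (d2 (i + 1) r) (d1 (i + 1) r)"
        unfolding rec_incl_def by simp
      show "rec_proj C d1 d2 (i + 1) r = coker C (factor C (rec_incl C d1 d2 (i + 1) r) (d1 i r \<cdot> d2 i (r - 1)))"
        unfolding rec_proj_def by simp
    qed
  qed
qed


end
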